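(* Let $L$ be a complex Leibniz algebra, let $I$ be the ideal generated by all squares $[x,x]$, $x\in L$, and suppose $L/I\cong\mathfrak{e}(2)$ and $I$, as a right $\mathfrak{e}(2)$-module via $(i,x+I)\mapsto[i,x]$, is isomorphic to the four-dimensional module with basis $X_1,\dots,X_4$ and action $(X_1,p_+)=X_3$, $(X_1,p_-)=-X_4$, $(X_2,p_-)=-X_3$, $(X_1,l)=\tfrac12X_1$, $(X_2,l)=-\tfrac32X_2$, $(X_3,l)=-\tfrac12X_3$, $(X_4,l)=\tfrac32X_4$ (all other products zero). Then there exists a basis $\{l,p_+,p_-,X_1,X_2,X_3,X_4\}$ of $L$ (with $X_i\in I$) in which the only nonzero products are $[l,p_+]=p_+$, $[p_+,l]=-p_+$, $[l,p_-]=-p_-$, $[p_-,l]=p_-$, $[X_1,p_+]=X_3$, $[X_1,p_-]=-X_4$, $[X_2,p_-]=-X_3$, $[X_1,l]=\tfrac12X_1$, $[X_2,l]=-\tfrac32X_2$, $[X_3,l]=-\tfrac12X_3$, $[X_4,l]=\tfrac32X_4$.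
   Context: A (right) Leibniz algebra is a vector space $L$ with a bilinear bracket satisfying $[[x,y],z]=[[x,z],y]+[x,[y,z]]$. The ideal $I$ generated by squares satisfies $[L,I]=0$, so $L/I$ is a Lie algebra and $I$ is a right $L/I$-module via $(i,x+I)\mapsto[i,x]$. $\mathfrak{e}(2)$ is the complex Lie algebra with basis $\{l,p_+,p_-\}$ and brackets $[l,p_+]=p_+$, $[l,p_-]=-p_-$, $[p_+,p_-]=0$. *)

theory Defs
  imports "HOL-Analysis.Analysis"
begin

text \<open>A complex vector space is a type 'a with an abstract scalar multiplication
  sc :: complex => 'a => 'a satisfying the vector_space axioms.\<close>

definition bilinear_sc :: "(complex \<Rightarrow> 'a::ab_group_add \<Rightarrow> 'a) \<Rightarrow> ('a \<Rightarrow> 'a \<Rightarrow> 'a) \<Rightarrow> bool" where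
  "bilinear_sc sc br \<longleftrightarrow>
     (\<forall>x. Vector_Spaces.linear sc sc (br x)) \<and> (\<forall>y. Vector_Spaces.linear sc sc (\<lambda>x. br x y))"

text \<open>Complex right Leibniz algebra: [[x,y],z] = [[x,z],y] + [x,[y,z]].\<close>
definition leibniz_algebra :: "(complex \<Rightarrow> 'a::ab_group_add \<Rightarrow> 'a) \<Rightarrow> ('a \<Rightarrow> 'a \<Rightarrow> 'a) \<Rightarrow> bool" where
  "leibniz_algebra sc br \<longleftrightarrow> vector_space sc \<and> bilinear_sc sc br \<and>
     (\<forall>x y z. br (br x y) z = br (br x z) y + br x (br y z))"

text \<open>Two-sided ideal.\<close>
definition is_ideal :: "(complex \<Rightarrow> 'a::ab_group_add \<Rightarrow> 'a) \<Rightarrow> ('a \<Rightarrow> 'a \<Rightarrow> 'a) \<Rightarrow> 'a set \<Rightarrow> bool" where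
  "is_ideal sc br J \<longleftrightarrow> module.subspace sc J \<and> (\<forall>j\<in>J. \<forall>x. br j x \<in> J \<and> br x j \<in> J)"

text \<open>The ideal generated by all squares [x,x].\<close>
definition square_ideal :: "(complex \<Rightarrow> 'a::ab_group_add \<Rightarrow> 'a) \<Rightarrow> ('a \<Rightarrow> 'a \<Rightarrow> 'a) \<Rightarrow> 'a set" where
  "square_ideal sc br = \<Inter>{J. is_ideal sc br J \<and> (\<forall>x. br x x \<in> J)}"

text \<open>The Lie algebra e(2) modelled on complex^3, coordinates (l, p_+, p_-) = indices 1,2,3:
  [l,p_+] = p_+, [l,p_-] = -p_-, [p_+,p_-] = 0.\<close>
definition e2_br :: "complex^3 \<Rightarrow> complex^3 \<Rightarrow> complex^3" where
  "e2_br u v = vector [0, u$1 * v$2 - u$2 * v$1, u$3 * v$1 - u$1 * v$3]"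

text \<open>The four-dimensional right e(2)-module on complex^4 (coordinates X_1..X_4 = indices 1..4):
  (X1,p+)=X3, (X1,p-)=-X4, (X2,p-)=-X3, (X1,l)=1/2 X1, (X2,l)=-3/2 X2,
  (X3,l)=-1/2 X3, (X4,l)=3/2 X4, all others zero.\<close>
definition M4_act :: "complex^4 \<Rightarrow> complex^3 \<Rightarrow> complex^4" where
  "M4_act x g = vector
     [ (1/2) * g$1 * x$1,
       -(3/2) * g$1 * x$2,
       g$2 * x$1 - g$3 * x$2 - (1/2) * g$1 * x$3,
       - g$3 * x$1 + (3/2) * g$1 * x$4 ]"

text \<open>Target multiplication table on a basis b 0, ..., b 6 = l, p_+, p_-, X_1, X_2, X_3, X_4.\<close>
definition target_table :: "(complex \<Rightarrow> 'a::ab_group_add \<Rightarrow> 'a) \<Rightarrow> (nat \<Rightarrow> 'a) \<Rightarrow> nat \<Rightarrow> nat \<Rightarrow> 'a" where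
  "target_table sc b i j =
    (if (i, j) = (0, 1) then b 1
     else if (i, j) = (1, 0) then - b 1
     else if (i, j) = (0, 2) then - b 2
     else if (i, j) = (2, 0) then b 2
     else if (i, j) = (3, 1) then b 5
     else if (i, j) = (3, 2) then - b 6
     else if (i, j) = (4, 2) then - b 5
     else if (i, j) = (3, 0) then sc (1/2) (b 3)
     else if (i, j) = (4, 0) then sc (-(3/2)) (b 4)
     else if (i, j) = (5, 0) then sc (-(1/2)) (b 5)
     else if (i, j) = (6, 0) then sc (3/2) (b 6)
     else 0)"

end

theory Submission imports Defs begin

lemma vector_4 [simp]:
 "(vector [x,y,z,w] ::('a::zero)^4)$1 = x"
 "(vector [x,y,z,w] ::('a::zero)^4)$2 = y"
 "(vector [x,y,z,w] ::('a::zero)^4)$3 = z"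
 "(vector [x,y,z,w] ::('a::zero)^4)$4 = w"
  unfolding vector_def by simp_all

lemma M4_comp [simp]:
  "M4_act x g $ 1 = (1/2) * g$1 * x$1"
  "M4_act x g $ 2 = -(3/2) * g$1 * x$2"
  "M4_act x g $ 3 = g$2 * x$1 - g$3 * x$2 - (1/2) * g$1 * x$3"
  "M4_act x g $ 4 = - g$3 * x$1 + (3/2) * g$1 * x$4"
  unfolding M4_act_def by simp_all

lemma e2_comp [simp]:
  "e2_br u v $ 1 = 0" "e2_br u v $ 2 = u$1 * v$2 - u$2 * v$1" "e2_br u v $ 3 = u$3 * v$1 - u$1 * v$3"
  unfolding e2_br_def by simp_all

lemma M4_solve: "M4_act (vector[2*u$1, -(2/3)*u$2, -2*u$3, (2/3)*u$4]) (vector[1,0,0]) = u"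
  by (simp add: vec_eq_iff forall_4)

lemma M4_inj0: "M4_act w (vector[1,0,0]) = 0 \<Longrightarrow> w = 0"
  by (simp add: vec_eq_iff forall_4)
lemma M4_inj2: "M4_act w (vector[1,0,0]) = 2 *s w \<Longrightarrow> w = 0"
  by (simp add: vec_eq_iff forall_4 field_simps)
lemma M4_injm2: "M4_act w (vector[1,0,0]) = -2 *s w \<Longrightarrow> w = 0"
  by (simp add: vec_eq_iff forall_4 field_simps)

theorem mainTheorem6:
  fixes sc :: "complex \<Rightarrow> 'a::ab_group_add \<Rightarrow> 'a"
    and br :: "'a \<Rightarrow> 'a \<Rightarrow> 'a"
  assumes leib: "leibniz_algebra sc br"
    and quot: "\<exists>\<pi> :: 'a \<Rightarrow> complex^3.
       Vector_Spaces.linear sc (*s) \<pi> \<and> surj \<pi> \<and>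
       {x. \<pi> x = 0} = square_ideal sc br \<and>
       (\<forall>x y. \<pi> (br x y) = e2_br (\<pi> x) (\<pi> y)) \<and>
       (\<exists>\<phi> :: 'a \<Rightarrow> complex^4.
          bij_betw \<phi> (square_ideal sc br) UNIV \<and>
          (\<forall>i\<in>square_ideal sc br. \<forall>j\<in>square_ideal sc br. \<phi> (i + j) = \<phi> i + \<phi> j) \<and>
          (\<forall>c. \<forall>i\<in>square_ideal sc br. \<phi> (sc c i) = c *s \<phi> i) \<and>
          (\<forall>i\<in>square_ideal sc br. \<forall>x. \<phi> (br i x) = M4_act (\<phi> i) (\<pi> x)))"
  shows "\<exists>b :: nat \<Rightarrow> 'a.
           inj_on b {0..<7} \<and>
           \<not> module.dependent sc (b ` {0..<7}) \<and>
           module.span sc (b ` {0..<7}) = UNIV \<and>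
           (\<forall>k\<in>{3..<7}. b k \<in> square_ideal sc br) \<and>
           (\<forall>i<7. \<forall>j<7. br (b i) (b j) = target_table sc b i j)"
proof -
  obtain \<pi> :: "'a \<Rightarrow> complex^3" and \<phi> :: "'a \<Rightarrow> complex^4"
    where lin: "Vector_Spaces.linear sc (*s) \<pi>" and sj: "surj \<pi>"
    and ker: "{x. \<pi> x = 0} = square_ideal sc br"
    and hom: "\<And>x y. \<pi> (br x y) = e2_br (\<pi> x) (\<pi> y)"
    and bij: "bij_betw \<phi> (square_ideal sc br) UNIV"
    and padd: "\<And>i j. i\<in>square_ideal sc br \<Longrightarrow> j\<in>square_ideal sc br \<Longrightarrow> \<phi> (i + j) = \<phi> i + \<phi> j"
    and psc: "\<And>c i. i\<in>square_ideal sc br \<Longrightarrow> \<phi> (sc c i) = c *s \<phi> i"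
    and pact: "\<And>i x. i\<in>square_ideal sc br \<Longrightarrow> \<phi> (br i x) = M4_act (\<phi> i) (\<pi> x)"
    using quot by blast
  define I where "I = square_ideal sc br"
  have vs: "vector_space sc" and bil: "bilinear_sc sc br"
    and LI: "\<And>x y z. br (br x y) z = br (br x z) y + br x (br y z)"
    using leib unfolding leibniz_algebra_def by blast+
  interpret V: vector_space sc by (rule vs)
  interpret P: Vector_Spaces.linear sc "(*s)" \<pi> by (rule lin)
  have hl: "\<And>x. module_hom sc sc (br x)" and hr: "\<And>y. module_hom sc sc (\<lambda>x. br x y)"
    using bil unfolding bilinear_sc_def linear_iff_module_hom by auto
  have bradd1: "\<And>a b y. br (a+b) y = br a y + br b y"
    using module_hom.add[OF hr] by simp
  have bradd2: "\<And>a b x. br x (a+b) = br x a + br x b"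
    using module_hom.add[OF hl] by simp
  have brneg1: "\<And>a y. br (-a) y = - br a y"
    using module_hom.neg[OF hr] by simp
  have brneg2: "\<And>a x. br x (-a) = - br x a"
    using module_hom.neg[OF hl] by simp
  have brdiff1: "\<And>a b y. br (a-b) y = br a y - br b y"
    using module_hom.diff[OF hr] by simp
  have brdiff2: "\<And>a b x. br x (a-b) = br x a - br x b"
    using module_hom.diff[OF hl] by simp
  have br01: "\<And>y. br 0 y = 0" using module_hom.zero[OF hr] by simp
  have memI: "\<And>x. x \<in> I \<longleftrightarrow> \<pi> x = 0" using ker unfolding I_def by blast
  have e2z: "\<And>u. e2_br u u = 0" "\<And>v. e2_br 0 v = 0" "\<And>v. e2_br v 0 = 0"
    by (simp_all add: vec_eq_iff forall_3 mult.commute)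
  \<comment> \<open>left multiplication by I vanishes\<close>
  have LI0: "\<And>i x. i \<in> I \<Longrightarrow> br x i = 0"
  proof -
    define J where "J = {i\<in>I. \<forall>x. br x i = 0}"
    have "is_ideal sc br J"
      unfolding is_ideal_def V.subspace_def
    proof (intro conjI ballI allI)
      show "0 \<in> J" unfolding J_def memI using module_hom.zero[OF hl] by simp
      fix a b assume "a \<in> J" "b \<in> J"
      then show "a + b \<in> J" unfolding J_def memI by (simp add: P.add bradd2)
    next
      fix c a assume "a \<in> J"
      then show "sc c a \<in> J" unfolding J_def memI using module_hom.scale[OF hl] by (simp add: P.scale)
    next
      fix j x assume j: "j \<in> J"
      then show "br x j \<in> J" unfolding J_def memI using module_hom.zero[OF hl] by simp
      show "br j x \<in> J" unfolding J_def memI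
      proof (intro conjI CollectI allI)
        show "\<pi> (br j x) = 0" using j unfolding J_def memI by (simp add: hom e2z)
        fix y have "br (br y j) x = br (br y x) j + br y (br j x)" by (rule LI)
        then show "br y (br j x) = 0" using j unfolding J_def by (simp add: br01)
      qed
    qed
    moreover have "\<forall>x. br x x \<in> J"
    proof
      fix x
      have "\<forall>y. br y (br x x) = 0"
      proof
        fix y show "br y (br x x) = 0" using LI[of y x x] by simp
      qed
      then show "br x x \<in> J" unfolding J_def memI by (simp add: hom e2z)
    qed
    ultimately have "I \<subseteq> J" unfolding I_def square_ideal_def by blast
    then show "\<And>i x. i \<in> I \<Longrightarrow> br x i = 0" unfolding J_def by blast
  qed
  \<comment> \<open>inverse of phi\<close>
  define \<psi> where "\<psi> = inv_into I \<phi>"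
  have bijI: "bij_betw \<phi> I UNIV" using bij unfolding I_def .
  have psiI: "\<And>v. \<psi> v \<in> I" unfolding \<psi>_def using bijI
    by (metis bij_betw_imp_surj_on inv_into_into UNIV_I)
  have phipsi: "\<And>v. \<phi> (\<psi> v) = v" unfolding \<psi>_def using bijI
    by (meson UNIV_I bij_betw_inv_into_right)
  have psiphi: "\<And>i. i \<in> I \<Longrightarrow> \<psi> (\<phi> i) = i" unfolding \<psi>_def using bijI
    by (meson bij_betw_inv_into_left)
  have IsubI: "\<And>i j. i \<in> I \<Longrightarrow> j \<in> I \<Longrightarrow> i + j \<in> I" using memI P.add by simp
  have IscI: "\<And>c i. i \<in> I \<Longrightarrow> sc c i \<in> I" using memI P.scale by simp
  have psiadd: "\<And>u v. \<psi> (u + v) = \<psi> u + \<psi> v"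
  proof -
    fix u v
    have "\<phi> (\<psi> u + \<psi> v) = u + v" using padd[of "\<psi> u" "\<psi> v"] psiI phipsi unfolding I_def by simp
    then have "\<psi> (u + v) = \<psi> (\<phi> (\<psi> u + \<psi> v))" by simp
    also have "\<dots> = \<psi> u + \<psi> v" using psiphi IsubI psiI by simp
    finally show "\<psi> (u + v) = \<psi> u + \<psi> v" .
  qed
  have psisc: "\<And>c v. \<psi> (c *s v) = sc c (\<psi> v)"
  proof -
    fix c v
    have "\<phi> (sc c (\<psi> v)) = c *s v" using psc[of "\<psi> v" c] psiI phipsi unfolding I_def by simp
    then have "\<psi> (c *s v) = \<psi> (\<phi> (sc c (\<psi> v)))" by simp
    also have "\<dots> = sc c (\<psi> v)" using psiphi IscI psiI by simp
    finally show "\<psi> (c *s v) = sc c (\<psi> v)" .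
  qed
  have psi0: "\<psi> 0 = 0" using psiadd[of 0 0] by simp
  have psineg: "\<And>v. \<psi> (- v) = - \<psi> v" using psiadd psi0
    by (metis add.right_inverse add_eq_0_iff)
  have psidiff: "\<And>u v. \<psi> (u - v) = \<psi> u - \<psi> v" using psiadd psineg
    by (metis diff_conv_add_uminus)
  have psiinj: "\<And>u v. \<psi> u = \<psi> v \<longleftrightarrow> u = v" using phipsi by metis
  have psiz: "\<And>u. \<psi> u = 0 \<longleftrightarrow> u = 0" using psiinj psi0 by metis
  have pipsi: "\<And>v. \<pi> (\<psi> v) = 0" using psiI memI by blast
  have brI: "\<And>i x. i \<in> I \<Longrightarrow> br i x = \<psi> (M4_act (\<phi> i) (\<pi> x))"
  proof -
    fix i x assume i: "i \<in> I"
    have "br i x \<in> I" using i memI by (simp add: hom e2z)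
    then have "br i x = \<psi> (\<phi> (br i x))" using psiphi by simp
    also have "\<dots> = \<psi> (M4_act (\<phi> i) (\<pi> x))" using pact i unfolding I_def by simp
    finally show "br i x = \<psi> (M4_act (\<phi> i) (\<pi> x))" .
  qed
  have brpsi: "\<And>v x. br (\<psi> v) x = \<psi> (M4_act v (\<pi> x))" using brI psiI phipsi by simp
  have brxpsi: "\<And>v x. br x (\<psi> v) = 0" using LI0 psiI by simp
  \<comment> \<open>lifts\<close>
  define e1 :: "complex^3" where "e1 = vector[1,0,0]"
  define e2 :: "complex^3" where "e2 = vector[0,1,0]"
  define e3 :: "complex^3" where "e3 = vector[0,0,1]"
  obtain l0 where l0: "\<pi> l0 = e1" using sj by (metis surjD)
  obtain p0 where p0: "\<pi> p0 = e2" using sj by (metis surjD)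
  obtain q0 where q0: "\<pi> q0 = e3" using sj by (metis surjD)
  have e2tab: "e2_br e1 e1 = 0" "e2_br e1 e2 = e2" "e2_br e1 e3 = - e3"
    "e2_br e2 e1 = - e2" "e2_br e3 e1 = e3" "e2_br e2 e3 = 0" "e2_br e3 e2 = 0"
    "e2_br e2 e2 = 0" "e2_br e3 e3 = 0"
    unfolding e1_def e2_def e3_def by (simp_all add: vec_eq_iff forall_3)
  define u where "u = \<phi> (br l0 l0)"
  have ll0I: "br l0 l0 \<in> I" using memI by (simp add: hom l0 e2tab)
  have ll0: "br l0 l0 = \<psi> u" unfolding u_def using psiphi ll0I by simp
  define fl :: "complex^4" where "fl = vector[2*(-u)$1, -(2/3)*(-u)$2, -2*(-u)$3, (2/3)*(-u)$4]"
  have fl: "M4_act fl e1 = - u" unfolding fl_def e1_def by (rule M4_solve)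
  define l where "l = l0 + \<psi> fl"
  have pil: "\<pi> l = e1" unfolding l_def by (simp add: P.add pipsi l0)
  have brll: "br l l = 0"
    unfolding l_def by (simp add: bradd1 bradd2 brxpsi brpsi ll0 l0 fl psiadd[symmetric] psi0)
  define p where "p = br l p0"
  have pip: "\<pi> p = e2" unfolding p_def by (simp add: hom pil p0 e2tab)
  have brlp: "br l p = p"
  proof -
    have "p - p0 \<in> I" using memI by (simp add: P.diff pip p0)
    then have "br l (p - p0) = 0" by (rule LI0)
    then show ?thesis unfolding brdiff2 p_def using LI0 by (simp add: p_def[symmetric])
  qed
  define q where "q = - br l q0"
  have piq: "\<pi> q = e3" unfolding q_def by (simp add: P.neg hom pil q0 e2tab)
  have brlq: "br l q = - q"
  proof -
    have "q - q0 \<in> I" using memI by (simp add: P.diff piq q0)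
    then have "br l (q - q0) = 0" by (rule LI0)
    then show ?thesis unfolding brdiff2 q_def by simp
  qed
  have e1: "M4_act w e1 = vector[(1/2)*w$1, -(3/2)*w$2, -(1/2)*w$3, (3/2)*w$4]" for w
    unfolding e1_def by (simp add: vec_eq_iff forall_4)
  have brpl: "br p l = - p"
  proof -
    have i: "br p l + p \<in> I" using memI by (simp add: P.add hom pip pil e2tab)
    have "br (br l p) l = br (br l l) p + br l (br p l)" by (rule LI)
    then have "br p l = br l (br p l)" by (simp add: brlp brll br01)
    also have "\<dots> = br l ((br p l + p) - p)" by simp
    also have "\<dots> = - p" unfolding brdiff2 using LI0[OF i] by (simp add: brlp)
    finally show ?thesis .
  qed
  have brql: "br q l = q"
  proof -
    have i: "br q l - q \<in> I" using memI by (simp add: P.diff hom piq pil e2tab)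
    have "br (br l q) l = br (br l l) q + br l (br q l)" by (rule LI)
    then have "- br q l = br l (br q l)" by (simp add: brlq brll br01 brneg1)
    also have "\<dots> = br l ((br q l - q) + q)" by simp
    also have "\<dots> = - q" unfolding bradd2 using LI0[OF i] by (simp add: brlq)
    finally show ?thesis by simp
  qed
  have pqI: "br p q \<in> I" and qpI: "br q p \<in> I" and ppI: "br p p \<in> I" and qqI: "br q q \<in> I"
    using memI by (simp_all add: hom pip piq e2tab)
  have brpq_qp: "br p q = - br q p"
  proof -
    have "br (br l p) q = br (br l q) p + br l (br p q)" by (rule LI)
    then show ?thesis using LI0[OF pqI] by (simp add: brlp brlq brneg1)
  qed
  have brpq: "br p q = 0"
  proof -
    have "br (br p q) l = br (br p l) q + br p (br q l)" by (rule LI)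
    then have "br (br p q) l = 0" by (simp add: brpl brql brneg1)
    then have "\<psi> (M4_act (\<phi> (br p q)) e1) = \<psi> 0" using brI[OF pqI] by (simp add: pil psi0)
    then have "\<phi> (br p q) = 0" using M4_inj0 unfolding psiinj e1_def by blast
    then show ?thesis using psiphi[OF pqI] psi0 by simp
  qed
  have brqp: "br q p = 0" using brpq brpq_qp by simp
  have brpp: "br p p = 0"
  proof -
    have "br (br p p) l = br (br p l) p + br p (br p l)" by (rule LI)
    then have "br (br p p) l = - br p p - br p p" by (simp add: brpl brneg1 brneg2)
    moreover have "br (br p p) l = \<psi> (M4_act (\<phi> (br p p)) e1)" using brI[OF ppI] pil by simp
    moreover have "- br p p - br p p = \<psi> (- \<phi> (br p p) - \<phi> (br p p))"
      unfolding psidiff psineg psiphi[OF ppI] ..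
    ultimately have "\<psi> (M4_act (\<phi> (br p p)) e1) = \<psi> (- \<phi> (br p p) - \<phi> (br p p))" by simp
    moreover have "- \<phi> (br p p) - \<phi> (br p p) = (-2) *s \<phi> (br p p)"
      by (simp add: vec_eq_iff)
    ultimately have "\<phi> (br p p) = 0" using M4_injm2 unfolding psiinj e1_def by metis
    then show ?thesis using psiphi[OF ppI] psi0 by simp
  qed
  have brqq: "br q q = 0"
  proof -
    have "br (br q q) l = br (br q l) q + br q (br q l)" by (rule LI)
    then have "br (br q q) l = br q q + br q q" by (simp add: brql)
    moreover have "br (br q q) l = \<psi> (M4_act (\<phi> (br q q)) e1)" using brI[OF qqI] pil by simp
    moreover have "br q q + br q q = \<psi> (\<phi> (br q q) + \<phi> (br q q))"
      unfolding psiadd psiphi[OF qqI] ..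
    ultimately have "\<psi> (M4_act (\<phi> (br q q)) e1) = \<psi> (\<phi> (br q q) + \<phi> (br q q))" by simp
    moreover have "\<phi> (br q q) + \<phi> (br q q) = 2 *s \<phi> (br q q)"
      by (simp add: vec_eq_iff)
    ultimately have "\<phi> (br q q) = 0" using M4_inj2 unfolding psiinj e1_def by metis
    then show ?thesis using psiphi[OF qqI] psi0 by simp
  qed
  define b :: "nat \<Rightarrow> 'a" where "b = (\<lambda>k. if k = 0 then l else if k = 1 then p else if k = 2 then q
     else if k = 3 then \<psi> (vector[1,0,0,0]) else if k = 4 then \<psi> (vector[0,1,0,0])
     else if k = 5 then \<psi> (vector[0,0,1,0]) else \<psi> (vector[0,0,0,1]))"
  have cases7: "\<And>k::nat. k < 7 \<Longrightarrow> k = 0 \<or> k = 1 \<or> k = 2 \<or> k = 3 \<or> k = 4 \<or> k = 5 \<or> k = 6" by arith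
  have scpsi: "\<And>c v. sc c (\<psi> v) = \<psi> (c *s v)" using psisc by simp
  have negpsi: "\<And>v. - \<psi> v = \<psi> (- v)" using psineg by simp
  have table: "\<forall>i<7. \<forall>j<7. br (b i) (b j) = target_table sc b i j"
  proof (intro allI impI)
    fix i j :: nat assume i: "i < 7" and j: "j < 7"
    show "br (b i) (b j) = target_table sc b i j"
      using cases7[OF i] cases7[OF j]
      by (elim disjE) (simp_all add: b_def target_table_def brll brlp brlq brpl brpp brpq brql brqp brqq
          brpsi brxpsi pil pip piq pipsi scpsi negpsi psiinj psiz e1_def e2_def e3_def vec_eq_iff forall_4)
  qed
  define S where "S = b ` {0..<7}"
  have set7: "{0..<7::nat} = {0,1,2,3,4,5,6}" by auto
  have neqs: "l \<noteq> p" "l \<noteq> q" "p \<noteq> q" "\<And>v. l \<noteq> \<psi> v" "\<And>v. p \<noteq> \<psi> v" "\<And>v. q \<noteq> \<psi> v"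
  proof -
    have nz: "e1 \<noteq> 0" "e2 \<noteq> 0" "e3 \<noteq> 0" "e1 \<noteq> e2" "e1 \<noteq> e3" "e2 \<noteq> e3"
      unfolding e1_def e2_def e3_def by (simp_all add: vec_eq_iff forall_3)
    show "l \<noteq> p" "l \<noteq> q" "p \<noteq> q" "\<And>v. l \<noteq> \<psi> v" "\<And>v. p \<noteq> \<psi> v" "\<And>v. q \<noteq> \<psi> v"
      using pil pip piq pipsi nz by metis+
  qed
  have injb: "inj_on b {0..<7}"
  proof (rule inj_onI)
    fix i j assume "i \<in> {0..<7::nat}" "j \<in> {0..<7::nat}" "b i = b j"
    then have ij: "i < 7" "j < 7" "b i = b j" by auto
    then show "i = j"
      using cases7[OF ij(1)] cases7[OF ij(2)]
      by (elim disjE) (simp_all add: b_def neqs neqs[THEN not_sym] psiinj vec_eq_iff forall_4)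
  qed
  have indep: "a0 = 0 \<and> a1 = 0 \<and> a2 = 0 \<and> a3 = 0 \<and> a4 = 0 \<and> a5 = 0 \<and> a6 = 0"
    if h: "sc a0 l + sc a1 p + sc a2 q + sc a3 (\<psi> (vector[1,0,0,0])) + sc a4 (\<psi> (vector[0,1,0,0]))
       + sc a5 (\<psi> (vector[0,0,1,0])) + sc a6 (\<psi> (vector[0,0,0,1])) = 0" for a0 a1 a2 a3 a4 a5 a6
  proof -
    have "\<pi> (sc a0 l + sc a1 p + sc a2 q + sc a3 (\<psi> (vector[1,0,0,0])) + sc a4 (\<psi> (vector[0,1,0,0]))
       + sc a5 (\<psi> (vector[0,0,1,0])) + sc a6 (\<psi> (vector[0,0,0,1]))) = 0" using h by simp
    then have "a0 *s e1 + a1 *s e2 + a2 *s e3 = 0" by (simp add: P.add P.scale pil pip piq pipsi)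
    then have a012: "a0 = 0 \<and> a1 = 0 \<and> a2 = 0" unfolding e1_def e2_def e3_def
      by (simp add: vec_eq_iff forall_3)
    have veq: "a3 *s vector[1,0,0,0] + a4 *s vector[0,1,0,0] + a5 *s vector[0,0,1,0] + a6 *s vector[0,0,0,1]
       = (vector[a3, a4, a5, a6] :: complex^4)" by (simp add: vec_eq_iff forall_4)
    have "\<psi> (a3 *s vector[1,0,0,0] + a4 *s vector[0,1,0,0] + a5 *s vector[0,0,1,0] + a6 *s vector[0,0,0,1]) = 0"
      using h a012 by (simp add: scpsi psiadd[symmetric])
    then have "\<psi> (vector[a3, a4, a5, a6]) = 0" unfolding veq .
    then show ?thesis using a012 unfolding psiz by (simp add: vec_eq_iff forall_4)
  qed
  have notdep: "\<not> V.dependent S"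
  proof
    assume "V.dependent S"
    have fS: "finite S" unfolding S_def by simp
    have "\<exists>u. (\<exists>v\<in>S. u v \<noteq> 0) \<and> (\<Sum>v\<in>S. sc (u v) v) = 0"
      using V.dependent_finite[OF fS] \<open>V.dependent S\<close> by (rule iffD1)
    then obtain w where w: "\<exists>v\<in>S. w v \<noteq> 0" and s: "(\<Sum>v\<in>S. sc (w v) v) = 0"
      by blast
    have "(\<Sum>v\<in>S. sc (w v) v) = (\<Sum>k\<in>{0..<7}. sc (w (b k)) (b k))"
      unfolding S_def by (rule sum.reindex_cong[OF injb refl refl])
    with s have "(\<Sum>k\<in>{0..<7}. sc (w (b k)) (b k)) = 0" by simp
    then have "sc (w (b 0)) (b 0) + (sc (w (b 1)) (b 1) + (sc (w (b 2)) (b 2) + (sc (w (b 3)) (b 3) + (sc (w (b 4)) (b 4)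
       + (sc (w (b 5)) (b 5) + sc (w (b 6)) (b 6)))))) = 0"
      unfolding set7 by simp
    then have "sc (w (b 0)) l + sc (w (b 1)) p + sc (w (b 2)) q + sc (w (b 3)) (\<psi> (vector[1,0,0,0])) + sc (w (b 4)) (\<psi> (vector[0,1,0,0]))
       + sc (w (b 5)) (\<psi> (vector[0,0,1,0])) + sc (w (b 6)) (\<psi> (vector[0,0,0,1])) = 0"
      by (simp add: b_def add.assoc[symmetric])
    note z = indep[OF this]
    have allz: "w (b k) = 0" if k: "k < 7" for k
      using cases7[OF k] z by (elim disjE) simp_all
    from w obtain v where "v \<in> S" "w v \<noteq> 0" by blast
    then obtain k where "k \<in> {0..<7}" "v = b k" unfolding S_def by blast
    then show False using allz \<open>w v \<noteq> 0\<close> by simp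
  qed
  have bS: "\<And>k. k < 7 \<Longrightarrow> b k \<in> S" unfolding S_def by simp
  have spanS: "V.span S = UNIV"
  proof (rule set_eqI, rule iffI)
    fix x :: 'a assume "x \<in> UNIV"
    define c where "c = \<pi> x"
    define i where "i = x - (sc (c$1) l + sc (c$2) p + sc (c$3) q)"
    have "\<pi> i = c - (c$1 *s e1 + c$2 *s e2 + c$3 *s e3)" unfolding i_def c_def
      by (simp add: P.add P.scale P.diff pil pip piq)
    also have "\<dots> = 0" unfolding e1_def e2_def e3_def by (simp add: vec_eq_iff forall_3)
    finally have iI: "i \<in> I" using memI by simp
    define z where "z = \<phi> i"
    have "z = (z$1) *s vector[1,0,0,0] + (z$2) *s vector[0,1,0,0] + (z$3) *s vector[0,0,1,0] + (z$4) *s vector[0,0,0,1]"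
      by (simp add: vec_eq_iff forall_4)
    then have "\<psi> z = \<psi> ((z$1) *s vector[1,0,0,0] + (z$2) *s vector[0,1,0,0] + (z$3) *s vector[0,0,1,0] + (z$4) *s vector[0,0,0,1])"
      by simp
    also have "\<dots> = sc (z$1) (b 3) + sc (z$2) (b 4) + sc (z$3) (b 5) + sc (z$4) (b 6)"
      unfolding psiadd psisc b_def by simp
    finally have "i = sc (z$1) (b 3) + sc (z$2) (b 4) + sc (z$3) (b 5) + sc (z$4) (b 6)"
      using psiphi[OF iI] unfolding z_def by simp
    then have "x = sc (c$1) (b 0) + sc (c$2) (b 1) + sc (c$3) (b 2) + (sc (z$1) (b 3) + sc (z$2) (b 4) + sc (z$3) (b 5) + sc (z$4) (b 6))"
      unfolding i_def b_def by (simp add: algebra_simps)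
    also have "\<dots> \<in> V.span S"
      by (intro V.span_add V.span_scale V.span_base bS) simp_all
    finally show "x \<in> V.span S" .
  qed simp
  have XI: "\<forall>k\<in>{3..<7}. b k \<in> square_ideal sc br"
    using psiI unfolding I_def b_def by simp
  show ?thesis
    apply (rule exI[of _ b])
    using injb notdep spanS XI table unfolding S_def by blast
qed
end
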